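(* Let $n,k$ be integers with $2\le k\le n/2$ such that $p=\gcd(n,k-1)>1$, and let $q=n/p$. Choose positive angles $\theta_1,\dots,\theta_p$ with $\theta_1+\dots+\theta_p=2\pi/q$. Divide the unit circle into $q$ equal arcs, and divide each of these arcs into $p$ consecutive arcs of angular lengths $\theta_1,\dots,\theta_p$, in this order. Then the inscribed $n$-gon whose vertices are the $n$ resulting division points is a Gutkin $(n,k)$-gon.
   Context: Let $P$ be a convex $n$-gon in the Euclidean plane with vertices $v_0,\dots,v_{n-1}$ in their cyclic (counterclockwise) order, indices taken modulo $n$. $P$ is a Gutkin $(n,k)$-gon if there exists an angle $\alpha$ such that for every $i$, $\angle v_{i+1}v_iv_{i+k}=\angle v_{i+k-1}v_{i+k}v_i=\alpha$, where $\angle abc$ denotes the angle at $b$ between the segments $ba$ and $bc$. *)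

theory Defs
  imports "HOL-Analysis.Analysis"
begin

text \<open>Points of the Euclidean plane are represented as complex numbers.
  The angle at b between the segments ba and bc (value in [0, pi]).\<close>
definition angle_at :: "complex \<Rightarrow> complex \<Rightarrow> complex \<Rightarrow> real" where
  "angle_at a b c = arccos (((a - b) \<bullet> (c - b)) / (norm (a - b) * norm (c - b)))"

definition cross2 :: "complex \<Rightarrow> complex \<Rightarrow> real" where
  "cross2 u w = Re u * Im w - Im u * Re w"

text \<open>v 0, ..., v (n-1) (indices taken mod n) are the vertices, in counterclockwise
  cyclic order, of a convex n-gon: n \<ge> 3, the vertices are distinct, and every vertex
  not on an edge lies strictly to the left of that (directed) edge.\<close>
definition convex_ngon :: "nat \<Rightarrow> (nat \<Rightarrow> complex) \<Rightarrow> bool" where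
  "convex_ngon n v \<longleftrightarrow> 3 \<le> n \<and>
     (\<forall>i<n. \<forall>j<n. i \<noteq> j \<longrightarrow> v i \<noteq> v j) \<and>
     (\<forall>i<n. \<forall>j<n. j \<noteq> i \<and> j \<noteq> (i + 1) mod n \<longrightarrow>
        cross2 (v ((i + 1) mod n) - v i) (v j - v i) > 0)"

definition gutkin_polygon :: "nat \<Rightarrow> nat \<Rightarrow> (nat \<Rightarrow> complex) \<Rightarrow> bool" where
  "gutkin_polygon n k v \<longleftrightarrow> convex_ngon n v \<and>
     (\<exists>\<alpha>. \<forall>i<n.
        angle_at (v ((i + 1) mod n)) (v i) (v ((i + k) mod n)) = \<alpha> \<and>
        angle_at (v ((i + k - 1) mod n)) (v ((i + k) mod n)) (v i) = \<alpha>)"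

end

theory Submission
  imports Defs
begin
lemma cis_diff_ms: "cis (m + s) - cis (m - s) = complex_of_real (2 * sin s) * cis (m + pi/2)"
  by (simp add: complex_eq_iff cos_add sin_add cos_diff sin_diff algebra_simps)

lemma cis_diff_eq: "cis b - cis a = complex_of_real (2 * sin ((b - a)/2)) * cis ((a+b)/2 + pi/2)"
  using cis_diff_ms[of "(a+b)/2" "(b-a)/2"] by (simp add: field_simps)

lemma inner_cis: "(complex_of_real r1 * cis x) \<bullet> (complex_of_real r2 * cis y) = r1 * r2 * cos (y - x)"
  by (simp add: inner_complex_def cos_diff algebra_simps)

lemma cross_cis: "cross2 (complex_of_real r1 * cis x) (complex_of_real r2 * cis y) = r1 * r2 * sin (y - x)"
  by (simp add: cross2_def sin_diff algebra_simps)

lemma norm_cis_r: "norm (complex_of_real r * cis x) = \<bar>r\<bar>"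
  by (simp add: norm_mult)

lemma geom:
  fixes a b c :: real
  assumes "a < b" "b < c" "c < a + 2*pi"
  shows "angle_at (cis b) (cis a) (cis c) = (c - b)/2"
    and "cross2 (cis b - cis a) (cis c - cis a) > 0"
    and "cis b \<noteq> cis a"
proof -
  define s1 where "s1 = sin ((b-a)/2)"
  define s2 where "s2 = sin ((c-a)/2)"
  have s1: "s1 > 0" unfolding s1_def by (rule sin_gt_zero) (use assms in auto)
  have s2: "s2 > 0" unfolding s2_def by (rule sin_gt_zero) (use assms in auto)
  have d: "((a+c)/2 + pi/2) - ((a+b)/2 + pi/2) = (c-b)/2" by (simp add: field_simps)
  have sy: "sin ((c-b)/2) > 0" by (rule sin_gt_zero) (use assms in auto)
  have e1: "cis b - cis a = complex_of_real (2 * s1) * cis ((a+b)/2 + pi/2)"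
    unfolding s1_def by (rule cis_diff_eq)
  have e2: "cis c - cis a = complex_of_real (2 * s2) * cis ((a+c)/2 + pi/2)"
    unfolding s2_def by (rule cis_diff_eq)
  show "cross2 (cis b - cis a) (cis c - cis a) > 0"
    unfolding e1 e2 cross_cis d using s1 s2 sy by simp
  show "cis b \<noteq> cis a"
  proof
    assume "cis b = cis a"
    then have "norm (cis b - cis a) = 0" by simp
    then show False unfolding e1 norm_cis_r using s1 by simp
  qed
  have "angle_at (cis b) (cis a) (cis c) = arccos (cos ((c-b)/2))"
    unfolding angle_at_def e1 e2 inner_cis norm_cis_r d using s1 s2 by simp
  also have "\<dots> = (c-b)/2" by (rule arccos_cos) (use assms in auto)
  finally show "angle_at (cis b) (cis a) (cis c) = (c - b)/2" .
qed

lemma angle_sym: "angle_at a b c = angle_at c b a"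
  unfolding angle_at_def by (simp add: inner_commute mult.commute)

theorem mainTheorem13:
  fixes n k p q :: nat and \<theta> :: "nat \<Rightarrow> real" and \<phi> :: real and v :: "nat \<Rightarrow> complex"
  assumes "2 \<le> k" and "2 * k \<le> n"
    and "p = gcd n (k - 1)" and "p > 1"
    and "q = n div p"
    and "\<forall>i<p. \<theta> i > 0"
    and "(\<Sum>i<p. \<theta> i) = 2 * pi / q"
    and "\<forall>m. v m = cis (\<phi> + 2 * pi * real (m div p) / real q + (\<Sum>l< m mod p. \<theta> l))"
  shows "gutkin_polygon n k v"
proof -
  note A = assms
  have p0: "p > 0" using A by simp
  have kn: "k < n" using A by simp
  have pdvd: "p dvd n" using A by simp
  have n_eq: "n = p * q" using A pdvd by simp
  have q0: "q > 0" using n_eq kn by (cases q) auto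
  obtain r where r: "k - 1 = p * r" using A by (metis dvd_def gcd_dvd2)
  define T where "T m = \<phi> + 2 * pi * real (m div p) / real q + (\<Sum>l< m mod p. \<theta> l)" for m
  have vT: "v m = cis (T m)" for m using A unfolding T_def by simp
  have Tsuc: "T (Suc m) = T m + \<theta> (m mod p)" for m
  proof (cases "Suc (m mod p) = p")
    case True
    have s: "(\<Sum>i<p. \<theta> i) = (\<Sum>i<m mod p. \<theta> i) + \<theta> (m mod p)"
      using True by (metis sum.lessThan_Suc)
    have "Suc m mod p = 0" using True by (simp add: mod_Suc)
    moreover have "Suc m div p = Suc (m div p)" using \<open>Suc m mod p = 0\<close> by (simp add: div_Suc)
    ultimately show ?thesis using s A(7) q0 unfolding T_def by (simp add: field_simps)
  next
    case False
    have "Suc m mod p = Suc (m mod p)" using False by (simp add: mod_Suc)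
    moreover have "Suc m div p = m div p" using False by (simp add: div_Suc mod_Suc)
    ultimately show ?thesis unfolding T_def by simp
  qed
  have Tmono: "strict_mono T"
  proof (rule strict_monoI_Suc)
    fix m show "T m < T (Suc m)" using Tsuc[of m] A(6) p0 by simp
  qed
  have Tlt: "a < b \<Longrightarrow> T a < T b" for a b using Tmono by (simp add: strict_mono_less)
  have Tp: "T (m + p) = T m + 2 * pi / q" for m
  proof -
    have "(m + p) div p = Suc (m div p)" "(m + p) mod p = m mod p" using p0 by auto
    then show ?thesis unfolding T_def using q0 by (simp add: field_simps)
  qed
  have Tpr: "T (m + p * r') = T m + real r' * (2 * pi / q)" for m r'
  proof (induction r')
    case 0 then show ?case by simp
  next
    case (Suc r')
    have "T (m + p * Suc r') = T ((m + p * r') + p)" by (simp add: algebra_simps)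
    also have "\<dots> = T (m + p * r') + 2 * pi / q" by (rule Tp)
    finally show ?case using Suc by (simp add: algebra_simps add_divide_distrib)
  qed
  have Tn: "T (m + n) = T m + 2 * pi" for m
    using Tpr[of m q] n_eq q0 by simp
  have vn: "v (m + n) = v m" for m
    unfolding vT Tn by (simp add: cis_mult[symmetric])
  have vmod: "v (x mod n) = v x" for x
  proof -
    have "v (x mod n + n * N) = v (x mod n)" for N
    proof (induction N)
      case (Suc N)
      have "v (x mod n + n * Suc N) = v ((x mod n + n * N) + n)" by (simp add: algebra_simps)
      also have "\<dots> = v (x mod n + n * N)" by (rule vn)
      finally show ?case using Suc by simp
    qed simp
    then show ?thesis by (metis mod_mult_div_eq)
  qed
  have Tk: "T (m + (k - 1)) = T m + real r * (2 * pi / q)" for m using Tpr r by simp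
  have conv: "convex_ngon n v"
    unfolding convex_ngon_def
  proof (intro conjI allI impI)
    show "3 \<le> n" using A by simp
  next
    fix i j assume ij: "i < n" "j < n" "i \<noteq> j"
    show "v i \<noteq> v j"
    proof (cases "i < j")
      case True
      have "T i < T j" "T j < T (i + n)" using True ij by (auto intro: Tlt)
      then have "T i < T j" "T j < T i + 2 * pi" using Tn[of i] by auto
      then show ?thesis using geom(3)[of "T i" "T j" "(T j + T i + 2 * pi) / 2"] unfolding vT by fastforce
    next
      case False
      then have "j < i" using ij by simp
      then have "T j < T i" "T i < T (j + n)" using ij by (auto intro: Tlt)
      then have "T j < T i" "T i < T j + 2 * pi" using Tn[of j] by auto
      then show ?thesis using geom(3)[of "T j" "T i" "(T i + T j + 2 * pi) / 2"] unfolding vT by fastforce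
    qed
  next
    fix i j assume ij: "i < n" "j < n" "j \<noteq> i \<and> j \<noteq> (i + 1) mod n"
    define d where "d = (j + n - i) mod n"
    have dn: "d < n" unfolding d_def using ij by simp
    have jd: "(i + d) mod n = j" unfolding d_def using ij
      by (metis add.commute add_diff_inverse_nat less_imp_le_nat mod_add_left_eq mod_add_self2 mod_less not_less trans_less_add2 le_add_diff_inverse2)
    have d0: "d \<noteq> 0"
    proof
      assume "d = 0" then have "j = i" using jd ij by simp
      then show False using ij by simp
    qed
    have d1: "d \<noteq> 1" using jd ij by auto
    have "T i < T (i + 1)" "T (i + 1) < T (i + d)" "T (i + d) < T (i + n)"
      using d0 d1 dn by (auto intro: Tlt)
    then have "T i < T (i + 1)" "T (i + 1) < T (i + d)" "T (i + d) < T i + 2 * pi"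
      using Tn[of i] by auto
    then have "cross2 (v (i + 1) - v i) (v (i + d) - v i) > 0"
      unfolding vT by (rule geom(2))
    then show "cross2 (v ((i + 1) mod n) - v i) (v j - v i) > 0"
      using vmod[of "i+1"] vmod[of "i+d"] jd by simp
  qed
  have ang: "\<forall>i<n. angle_at (v ((i + 1) mod n)) (v i) (v ((i + k) mod n)) = real r * (pi / q) \<and>
        angle_at (v ((i + k - 1) mod n)) (v ((i + k) mod n)) (v i) = real r * (pi / q)"
  proof (intro allI impI conjI)
    fix i assume i: "i < n"
    have "T i < T (i + 1)" "T (i + 1) < T (i + k)" "T (i + k) < T (i + n)"
      using A kn by (auto intro: Tlt)
    then have "T i < T (i + 1)" "T (i + 1) < T (i + k)" "T (i + k) < T i + 2 * pi"
      using Tn[of i] by auto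
    then have e1: "angle_at (v (i + 1)) (v i) (v (i + k)) = (T (i + k) - T (i + 1)) / 2"
      unfolding vT by (rule geom(1))
    have "T (i + k) = T (i + 1 + (k - 1)) " using A by simp
    then have e2: "T (i + k) - T (i + 1) = real r * (2 * pi / q)" using Tk[of "i+1"] by simp
    have "angle_at (v (i + 1)) (v i) (v (i + k)) = real r * (pi / q)"
      unfolding e1 e2 by simp
    then show "angle_at (v ((i + 1) mod n)) (v i) (v ((i + k) mod n)) = real r * (pi / q)"
      using vmod[of "i+1"] vmod[of "i+k"] by simp
    have "T (i + k) < T (i + n)" "T (i + n) < T (i + n + (k - 1))" "T (i + n + (k - 1)) < T (i + k + n)"
      using A kn by (auto intro: Tlt)
    then have "T (i + k) < T (i + n)" "T (i + n) < T (i + n + (k - 1))" "T (i + n + (k - 1)) < T (i + k) + 2 * pi"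
      using Tn[of "i+k"] by auto
    then have e1: "angle_at (v (i + n)) (v (i + k)) (v (i + n + (k - 1))) = (T (i + n + (k - 1)) - T (i + n)) / 2"
      unfolding vT by (rule geom(1))
    have e2: "T (i + n + (k - 1)) - T (i + n) = real r * (2 * pi / q)" using Tk[of "i+n"] by simp
    have e3: "v (i + n + (k - 1)) = v (i + k - 1)"
      using vn[of "i + k - 1"] A by (simp add: algebra_simps)
    have "angle_at (v (i + n)) (v (i + k)) (v (i + n + (k - 1))) = real r * (pi / q)"
      unfolding e1 e2 by simp
    then have "angle_at (v i) (v (i + k)) (v (i + k - 1)) = real r * (pi / q)"
      unfolding e3 vn by simp
    then show "angle_at (v ((i + k - 1) mod n)) (v ((i + k) mod n)) (v i) = real r * (pi / q)"
      using vmod[of "i+k-1"] vmod[of "i+k"] angle_sym by metis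
  qed
  show ?thesis unfolding gutkin_polygon_def using conv ang by blast
qed

end
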